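(* Let $x\cdot y$ be a PA-structure on $(\mathfrak{g},\mathfrak{n})$, where $\mathfrak{g}$ is abelian and $\mathfrak{n}$ is $2$-step nilpotent. Then $x\circ y=\frac12(x\cdot y+y\cdot x)$ defines a CPA-structure on $\mathfrak{n}$ if and only if $\{\mathfrak{n},\mathfrak{n}\}\cdot\mathfrak{n}=0$, i.e. $\{u,v\}\cdot w=0$ for all $u,v,w\in V$.
   Context: Let $K$ be a field of characteristic zero and $V$ a finite-dimensional vector space over $K$. Let $\mathfrak{g}=(V,[\,,])$ and $\mathfrak{n}=(V,\{\,,\})$ be two Lie algebra structures on $V$. A post-Lie algebra structure (PA-structure) on the pair $(\mathfrak{g},\mathfrak{n})$ is a $K$-bilinear product $x\cdot y$ on $V$ satisfying, for all $x,y,z\in V$: (i) $x\cdot y-y\cdot x=[x,y]-\{x,y\}$; (ii) $[x,y]\cdot z=x\cdot(y\cdot z)-y\cdot(x\cdot z)$; (iii) $x\cdot\{y,z\}=\{x\cdot y,z\}+\{y,x\cdot z\}$. A commutative post-Lie algebra structure (CPA-structure) on the Lie algebra $\mathfrak{n}=(V,\{\,,\})$ is a bilinear product $x\circ y$ on $V$ with $x\circ y=y\circ x$, $\{x,y\}\circ z=x\circ(y\circ z)-y\circ(x\circ z)$, and $x\circ\{y,z\}=\{x\circ y,z\}+\{y,x\circ z\}$ for all $x,y,z$. A Lie algebra is called $2$-step nilpotent here if it is nilpotent of class at most $2$. *)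

theory Defs
  imports Complex_Main
begin

text \<open>A vector space V (the type 'v) over a field K (the type 'k) is given by a
scalar multiplication scale satisfying the axioms of the locale vector_space.\<close>

definition fin_dim_vs :: "('k::field \<Rightarrow> 'v::ab_group_add \<Rightarrow> 'v) \<Rightarrow> bool" where
  "fin_dim_vs scale \<longleftrightarrow> (\<exists>B. finite_dimensional_vector_space scale B)"

definition bilinear_map :: "('k::field \<Rightarrow> 'v::ab_group_add \<Rightarrow> 'v) \<Rightarrow> ('v \<Rightarrow> 'v \<Rightarrow> 'v) \<Rightarrow> bool" where
  "bilinear_map scale f \<longleftrightarrow>
     (\<forall>x. Vector_Spaces.linear scale scale (f x)) \<and>
     (\<forall>y. Vector_Spaces.linear scale scale (\<lambda>x. f x y))"

definition lie_algebra :: "('k::field \<Rightarrow> 'v::ab_group_add \<Rightarrow> 'v) \<Rightarrow> ('v \<Rightarrow> 'v \<Rightarrow> 'v) \<Rightarrow> bool" where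
  "lie_algebra scale br \<longleftrightarrow> bilinear_map scale br \<and> (\<forall>x. br x x = 0) \<and>
     (\<forall>x y z. br x (br y z) + br y (br z x) + br z (br x y) = 0)"

definition abelian_lie :: "('v::ab_group_add \<Rightarrow> 'v \<Rightarrow> 'v) \<Rightarrow> bool" where
  "abelian_lie br \<longleftrightarrow> (\<forall>x y. br x y = 0)"

definition two_step_nilpotent :: "('v::ab_group_add \<Rightarrow> 'v \<Rightarrow> 'v) \<Rightarrow> bool" where
  "two_step_nilpotent br \<longleftrightarrow> (\<forall>x y z. br (br x y) z = 0)"

text \<open>Post-Lie algebra structure on the pair (g, n) = ((V, lb), (V, nb)).\<close>
definition PA_structure :: "('k::field \<Rightarrow> 'v::ab_group_add \<Rightarrow> 'v) \<Rightarrow> ('v \<Rightarrow> 'v \<Rightarrow> 'v)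
    \<Rightarrow> ('v \<Rightarrow> 'v \<Rightarrow> 'v) \<Rightarrow> ('v \<Rightarrow> 'v \<Rightarrow> 'v) \<Rightarrow> bool" where
  "PA_structure scale lb nb p \<longleftrightarrow> bilinear_map scale p \<and>
     (\<forall>x y. p x y - p y x = lb x y - nb x y) \<and>
     (\<forall>x y z. p (lb x y) z = p x (p y z) - p y (p x z)) \<and>
     (\<forall>x y z. p x (nb y z) = nb (p x y) z + nb y (p x z))"

definition CPA_structure :: "('k::field \<Rightarrow> 'v::ab_group_add \<Rightarrow> 'v)
    \<Rightarrow> ('v \<Rightarrow> 'v \<Rightarrow> 'v) \<Rightarrow> ('v \<Rightarrow> 'v \<Rightarrow> 'v) \<Rightarrow> bool" where
  "CPA_structure scale nb c \<longleftrightarrow> bilinear_map scale c \<and>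
     (\<forall>x y. c x y = c y x) \<and>
     (\<forall>x y z. c (nb x y) z = c x (c y z) - c y (c x z)) \<and>
     (\<forall>x y z. c x (nb y z) = nb (c x y) z + nb y (c x z))"

end

theory Submission
  imports Defs
begin

lemma lin_facts:
  assumes "Vector_Spaces.linear s s f"
  shows "f (a + b) = f a + f b" "f (s c a) = s c (f a)" "f (a - b) = f a - f b" "f 0 = 0" "f (- a) = - f a"
proof -
  have m: "module_hom s s f" using assms by (simp add: module_hom_iff_linear)
  show "f (a + b) = f a + f b" by (rule module_hom.add[OF m])
  show "f (s c a) = s c (f a)" by (rule module_hom.scale[OF m])
  show "f (a - b) = f a - f b" by (rule module_hom.diff[OF m])
  show "f 0 = 0" by (rule module_hom.zero[OF m])
  show "f (- a) = - f a" by (rule module_hom.neg[OF m])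
qed

lemma linI:
  assumes "vector_space s" "\<And>x y. f (x + y) = f x + f y" "\<And>c x. f (s c x) = s c (f x)"
  shows "Vector_Spaces.linear s s f"
  unfolding Vector_Spaces.linear_iff using assms by blast

theorem corollary4p8:
  fixes scale :: "'k::field_char_0 \<Rightarrow> 'v::ab_group_add \<Rightarrow> 'v"
    and lb nb p :: "'v \<Rightarrow> 'v \<Rightarrow> 'v"
  assumes "fin_dim_vs scale"
    and "lie_algebra scale lb" and "lie_algebra scale nb"
    and "abelian_lie lb" and "two_step_nilpotent nb"
    and "PA_structure scale lb nb p"
  shows "CPA_structure scale nb (\<lambda>x y. scale (1/2) (p x y + p y x))
         \<longleftrightarrow> (\<forall>u v w. p (nb u v) w = 0)"
proof -
  from assms(1) obtain B where "finite_dimensional_vector_space scale B"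
    unfolding fin_dim_vs_def by blast
  then interpret vector_space scale
    by (simp add: finite_dimensional_vector_space_def)
  define h :: 'k where "h = 1/2"
  define c where "c = (\<lambda>x y. scale (1/2) (p x y + p y x))"
  have bp: "bilinear_map scale p" using assms(6) by (simp add: PA_structure_def)
  have bn: "bilinear_map scale nb" using assms(3) by (simp add: lie_algebra_def)
  have pl1: "Vector_Spaces.linear scale scale (p x)" for x using bp by (simp add: bilinear_map_def)
  have pl2: "Vector_Spaces.linear scale scale (\<lambda>x. p x y)" for y using bp by (simp add: bilinear_map_def)
  have nl1: "Vector_Spaces.linear scale scale (nb x)" for x using bn by (simp add: bilinear_map_def)
  have nl2: "Vector_Spaces.linear scale scale (\<lambda>x. nb x y)" for y using bn by (simp add: bilinear_map_def)
  note P1 = lin_facts[OF pl1] and P2 = lin_facts[OF pl2, simplified]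
    and N1 = lin_facts[OF nl1] and N2 = lin_facts[OF nl2, simplified]
  have lb0: "lb x y = 0" for x y using assms(4) by (simp add: abelian_lie_def)
  have nn: "nb (nb x y) z = 0" for x y z using assms(5) by (simp add: two_step_nilpotent_def)
  have alt: "nb x x = 0" for x using assms(3) by (simp add: lie_algebra_def)
  have anti: "nb y x = - nb x y" for x y
  proof -
    have "nb (x+y) (x+y) = 0" by (rule alt)
    then have "nb x x + nb y x + (nb x y + nb y y) = 0" by (simp add: N1 N2)
    then have "nb y x + nb x y = 0" by (simp add: alt)
    then show ?thesis by (simp add: add_eq_0_iff)
  qed
  have nn2: "nb x (nb y z) = 0" for x y z using anti[of x "nb y z"] nn by simp
  have pyx: "p y x = p x y + nb x y" for x y
  proof -
    have "p x y - p y x = lb x y - nb x y" using assms(6) unfolding PA_structure_def by blast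
    then have "p x y - p y x = - nb x y" by (simp add: lb0)
    then show ?thesis by (simp add: algebra_simps)
  qed
  have comm: "p x (p y z) = p y (p x z)" for x y z
  proof -
    have "p (lb x y) z = p x (p y z) - p y (p x z)" using assms(6) unfolding PA_structure_def by blast
    then have "0 = p x (p y z) - p y (p x z)" by (simp add: lb0 P2)
    then show ?thesis by simp
  qed
  have der: "p x (nb y z) = nb (p x y) z + nb y (p x z)" for x y z
    using assms(6) unfolding PA_structure_def by blast
  have hh: "scale h a + scale h a = a" for a
    by (simp add: h_def scale_left_distrib[symmetric])
  have cform: "c x y = p x y + scale h (nb x y)" for x y
  proof -
    have "c x y = scale h (p x y + p x y + nb x y)" by (simp add: c_def h_def pyx[of y x] add.assoc)
    also have "\<dots> = p x y + scale h (nb x y)" by (simp add: scale_right_distrib hh)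
    finally show ?thesis .
  qed
  have cl1: "Vector_Spaces.linear scale scale (c x)" for x
  proof (rule linI[OF vector_space_axioms])
    fix a b show "c x (a + b) = c x a + c x b"
      by (simp add: cform P1 N1 scale_right_distrib add_ac)
    fix k a show "c x (scale k a) = scale k (c x a)"
      unfolding cform P1 N1 scale_right_distrib by (simp add: scale_left_commute)
  qed
  have cl2: "Vector_Spaces.linear scale scale (\<lambda>y. c y x)" for x
  proof (rule linI[OF vector_space_axioms])
    fix a b show "c (a + b) x = c a x + c b x"
      by (simp add: cform P2 N2 scale_right_distrib add_ac)
    fix k a show "c (scale k a) x = scale k (c a x)"
      unfolding cform P2 N2 scale_right_distrib by (simp add: scale_left_commute)
  qed
  have cbil: "bilinear_map scale c" using cl1 cl2 by (simp add: bilinear_map_def)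
  have ccomm: "c x y = c y x" for x y unfolding c_def by (simp add: add.commute)
  have cder: "c x (nb y z) = nb (c x y) z + nb y (c x z)" for x y z
    by (simp add: cform der N1 N2 nn nn2)
  have crhs: "c x (c y z) - c y (c x z) = 0" for x y z
  proof -
    have e: "c x (c y z) = p x (p y z) + scale h (p x (nb y z)) + scale h (nb x (p y z))" for x y z
      by (simp add: cform P1 N1 nn2)
    have "p x (nb y z) - p y (nb x z) + nb x (p y z) - nb y (p x z) = nb (p x y - p y x) z"
      by (simp add: der N2 algebra_simps)
    also have "\<dots> = 0" by (simp add: pyx[of y x] N2 nn)
    finally have z: "p x (nb y z) + nb x (p y z) = p y (nb x z) + nb y (p x z)"
      by (simp add: algebra_simps)
    have "c x (c y z) = p x (p y z) + scale h (p x (nb y z) + nb x (p y z))"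
      by (simp add: e scale_right_distrib add.assoc)
    also have "\<dots> = p y (p x z) + scale h (p y (nb x z) + nb y (p x z))"
      by (simp add: z comm[of x y])
    also have "\<dots> = c y (c x z)"
      by (simp add: e scale_right_distrib add.assoc)
    finally show ?thesis by simp
  qed
  have clhs: "c (nb x y) z = p (nb x y) z" for x y z by (simp add: cform nn)
  have "CPA_structure scale nb c \<longleftrightarrow> (\<forall>u v w. p (nb u v) w = 0)"
    unfolding CPA_structure_def using cbil ccomm cder crhs clhs by auto
  then show ?thesis by (simp add: c_def)
qed

end
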